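(* Let $B=B_1\circ B_2\circ\cdots\circ B_n$ be a composition of $n$ finite Blaschke products with $\deg B_j=k_j$ for $j=1,\dots,n$. Then $B$ has at most $\sum_{i=1}^n(k_i-1)$ distinct critical values.
   Context: A finite Blaschke product of degree $d$ is $B(z)=\gamma\prod_{j=1}^d \frac{z-a_j}{1-\overline{a_j}z}$ with $a_j\in\mathbb{D}$ and $|\gamma|=1$. The set of critical values of $B$ is $\{w\in\mathbb{D}: w=B(z)\text{ for some } z\in\mathbb{D} \text{ with } B'(z)=0\}$. *)

theory Defs
  imports "HOL-Complex_Analysis.Complex_Analysis"
begin

definition finite_blaschke :: "nat \<Rightarrow> (complex \<Rightarrow> complex) \<Rightarrow> bool" where
  "finite_blaschke d B \<longleftrightarrow>
     (\<exists>\<gamma> (a :: nat \<Rightarrow> complex). cmod \<gamma> = 1 \<and> (\<forall>j<d. a j \<in> ball 0 1) \<and>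
        (\<forall>z. B z = \<gamma> * (\<Prod>j<d. (z - a j) / (1 - cnj (a j) * z))))"

definition critical_values :: "(complex \<Rightarrow> complex) \<Rightarrow> complex set" where
  "critical_values B = {w \<in> ball 0 1. \<exists>z \<in> ball 0 1. w = B z \<and> deriv B z = 0}"

text \<open>Composition Bs 0 o Bs 1 o ... o Bs (n-1).\<close>
definition compose_all :: "nat \<Rightarrow> (nat \<Rightarrow> complex \<Rightarrow> complex) \<Rightarrow> complex \<Rightarrow> complex" where
  "compose_all n Bs = foldr (\<lambda>j f. Bs j \<circ> f) [0..<n] id"

end

theory Submission imports Defs "HOL-Computational_Algebra.Polynomial"
begin

definition gp :: "complex \<Rightarrow> complex poly" where
  "gp b = [:-b, 1:] * [:1, - cnj b:]"

fun Gp :: "(nat \<Rightarrow> complex) \<Rightarrow> nat \<Rightarrow> complex poly" where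
  "Gp a 0 = 1"
| "Gp a (Suc k) = gp (a k) * Gp a k"

fun Np :: "(nat \<Rightarrow> complex) \<Rightarrow> nat \<Rightarrow> complex poly" where
  "Np a 0 = 0"
| "Np a (Suc k) = gp (a k) * Np a k + smult (1 - cnj (a k) * a k) (Gp a k)"

lemma poly_gp: "poly (gp b) z = (z - b) * (1 - cnj b * z)"
  by (simp add: gp_def algebra_simps)

lemma poly_Gp: "poly (Gp a k) z = (\<Prod>j<k. z - a j) * (\<Prod>j<k. 1 - cnj (a j) * z)"
  by (induction k) (simp_all add: poly_gp algebra_simps)

lemma degree_gp: "degree (gp b) \<le> 2"
proof -
  have "degree (gp b) \<le> degree [:-b, 1:] + degree [:1, - cnj b:]"
    unfolding gp_def by (rule degree_mult_le)
  also have "\<dots> \<le> 2" by simp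
  finally show ?thesis .
qed

lemma degree_Gp: "degree (Gp a k) \<le> 2 * k"
proof (induction k)
  case (Suc k)
  have "degree (Gp a (Suc k)) \<le> degree (gp (a k)) + degree (Gp a k)"
    by (simp add: degree_mult_le)
  then show ?case using Suc degree_gp[of "a k"] by simp
qed simp

lemma degree_Np: "degree (Np a k) \<le> 2 * k - 2"
proof (induction k)
  case (Suc k)
  have 1: "degree (gp (a k) * Np a k) \<le> 2 * Suc k - 2"
  proof (cases k)
    case 0 then show ?thesis by simp
  next
    case (Suc m)
    have "degree (gp (a k) * Np a k) \<le> degree (gp (a k)) + degree (Np a k)"
      by (simp add: degree_mult_le)
    then show ?thesis using Suc Suc.IH degree_gp[of "a k"] by simp
  qed
  have 2: "degree (smult (1 - cnj (a k) * a k) (Gp a k)) \<le> 2 * Suc k - 2"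
    using degree_Gp[of a k] by (simp add: degree_smult_le order_trans[OF degree_smult_le])
  show ?case using degree_add_le[OF 1 2] by simp
qed simp

lemma gp_reflect:
  assumes "z \<noteq> 0"
  shows "poly (gp b) (1 / cnj z) * cnj z ^ 2 = cnj (poly (gp b) z)"
  using assms by (simp add: poly_gp field_simps power2_eq_square)

lemma Gp_reflect:
  assumes "z \<noteq> 0"
  shows "poly (Gp a k) (1 / cnj z) * cnj z ^ (2 * k) = cnj (poly (Gp a k) z)"
proof (induction k)
  case (Suc k)
  have "poly (Gp a (Suc k)) (1 / cnj z) * cnj z ^ (2 * Suc k)
     = (poly (gp (a k)) (1 / cnj z) * cnj z ^ 2) * (poly (Gp a k) (1 / cnj z) * cnj z ^ (2 * k))"
    by (simp add: power_add mult_2 power2_eq_square algebra_simps)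
  also have "\<dots> = cnj (poly (Gp a (Suc k)) z)"
    using Suc gp_reflect[OF assms] by simp
  finally show ?case .
qed simp

lemma Np_reflect:
  assumes "z \<noteq> 0"
  shows "poly (Np a k) (1 / cnj z) * cnj z ^ (2 * k) = cnj (poly (Np a k) z) * cnj z ^ 2"
proof (induction k)
  case (Suc k)
  have "poly (Np a (Suc k)) (1 / cnj z) * cnj z ^ (2 * Suc k)
     = (poly (gp (a k)) (1 / cnj z) * cnj z ^ 2) * (poly (Np a k) (1 / cnj z) * cnj z ^ (2 * k))
       + (1 - cnj (a k) * a k) * (poly (Gp a k) (1 / cnj z) * cnj z ^ (2 * k)) * cnj z ^ 2"
    by (simp add: power_add mult_2 power2_eq_square algebra_simps)
  also have "\<dots> = cnj (poly (Np a (Suc k)) z) * cnj z ^ 2"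
    using Suc gp_reflect[OF assms] Gp_reflect[OF assms] by (simp add: algebra_simps)
  finally show ?case .
qed simp


lemma factor_deriv:
  assumes "1 - cnj b * z \<noteq> 0"
  shows "((\<lambda>z. (z - b) / (1 - cnj b * z)) has_field_derivative
           (1 - cnj b * b) / (1 - cnj b * z)^2) (at z)"
proof -
  have "((\<lambda>z. (z - b) / (1 - cnj b * z)) has_field_derivative
           ((1 - 0) * (1 - cnj b * z) - (z - b) * (0 - cnj b * 1)) / ((1 - cnj b * z) * (1 - cnj b * z))) (at z)"
    by (intro DERIV_divide DERIV_diff DERIV_ident DERIV_const DERIV_cmult assms)
  also have "((1 - 0) * (1 - cnj b * z) - (z - b) * (0 - cnj b * 1)) / ((1 - cnj b * z) * (1 - cnj b * z))
     = (1 - cnj b * b) / (1 - cnj b * z)^2"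
    by (simp add: power2_eq_square algebra_simps)
  finally show ?thesis .
qed

lemma blaschke_deriv:
  assumes "\<forall>j<k. 1 - cnj (a j) * z \<noteq> 0"
  shows "((\<lambda>z. \<Prod>j<k. (z - a j) / (1 - cnj (a j) * z)) has_field_derivative
          poly (Np a k) z / (\<Prod>j<k. 1 - cnj (a j) * z)^2) (at z)"
  using assms
proof (induction k)
  case 0
  then show ?case by simp
next
  case (Suc k)
  define P where "P = (\<Prod>j<k. z - a j)"
  define Q where "Q = (\<Prod>j<k. 1 - cnj (a j) * z)"
  define q where "q = 1 - cnj (a k) * z"
  have Q0: "Q \<noteq> 0" using Suc.prems unfolding Q_def by (simp add: prod_zero_iff)
  have q0: "q \<noteq> 0" using Suc.prems unfolding q_def by simp
  have IH: "((\<lambda>z. \<Prod>j<k. (z - a j) / (1 - cnj (a j) * z)) has_field_derivative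
          poly (Np a k) z / Q^2) (at z)" using Suc unfolding Q_def by simp
  have d: "((\<lambda>z. (z - a k) / (1 - cnj (a k) * z)) has_field_derivative
           (1 - cnj (a k) * a k) / q^2) (at z)"
    unfolding q_def by (rule factor_deriv) (use q0 in \<open>simp add: q_def\<close>)
  have pr: "(\<Prod>j<k. (z - a j) / (1 - cnj (a j) * z)) = P / Q"
    unfolding P_def Q_def by (simp add: prod_dividef)
  have eq: "(\<lambda>z. \<Prod>j<Suc k. (z - a j) / (1 - cnj (a j) * z)) =
            (\<lambda>z. (\<Prod>j<k. (z - a j) / (1 - cnj (a j) * z)) * ((z - a k) / (1 - cnj (a k) * z)))"
    by simp
  have val: "poly (Np a k) z / Q^2 * ((z - a k) / (1 - cnj (a k) * z)) +
             (1 - cnj (a k) * a k) / q^2 * (\<Prod>j<k. (z - a j) / (1 - cnj (a j) * z))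
           = poly (Np a (Suc k)) z / (\<Prod>j<Suc k. 1 - cnj (a j) * z)^2"
  proof -
    have Nsuc: "poly (Np a (Suc k)) z = (z - a k) * q * poly (Np a k) z + (1 - cnj (a k) * a k) * (P * Q)"
      by (simp add: poly_gp poly_Gp P_def Q_def q_def)
    have Qsuc: "(\<Prod>j<Suc k. 1 - cnj (a j) * z) = Q * q" by (simp add: Q_def q_def)
    show ?thesis unfolding pr Nsuc Qsuc q_def[symmetric]
      using Q0 q0 by (simp add: field_simps power2_eq_square)
  qed
  show ?case unfolding eq
    using DERIV_mult[OF IH d] val by simp
qed


lemma norm_identity:
  "(cmod (1 - cnj a * z))^2 - (cmod (z - a))^2 = (1 - (cmod z)^2) * (1 - (cmod a)^2)"
proof -
  have "complex_of_real ((cmod (1 - cnj a * z))^2 - (cmod (z - a))^2) =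
        complex_of_real ((1 - (cmod z)^2) * (1 - (cmod a)^2))"
    by (simp only: of_real_diff of_real_mult of_real_1 complex_norm_square)
       (simp add: algebra_simps)
  then show ?thesis using of_real_eq_iff by blast
qed

lemma factor_in_disc:
  assumes "cmod a < 1" "cmod z < 1"
  shows "1 - cnj a * z \<noteq> 0" "cmod ((z - a) / (1 - cnj a * z)) < 1"
proof -
  have "cmod (cnj a * z) < 1"
  proof -
    have "cmod a * cmod z \<le> 1 * cmod z" using assms by (intro mult_right_mono) auto
    then show ?thesis using assms by (simp add: norm_mult)
  qed
  then show nz: "1 - cnj a * z \<noteq> 0" by auto
  have "(1 - (cmod z)^2) * (1 - (cmod a)^2) > 0"
    using assms by (simp add: abs_square_less_1)
  then have "(cmod (z - a))^2 < (cmod (1 - cnj a * z))^2"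
    using norm_identity[of a z] by linarith
  then have "cmod (z - a) < cmod (1 - cnj a * z)"
    using power2_less_imp_less norm_ge_zero by blast
  then show "cmod ((z - a) / (1 - cnj a * z)) < 1"
    using nz by (simp add: norm_divide divide_less_eq)
qed

lemma gp_at_1:
  assumes "cmod b < 1"
  shows "\<exists>s. poly (gp b) 1 = complex_of_real s \<and> s > 0"
proof -
  have "poly (gp b) 1 = (1 - b) * cnj (1 - b)" by (simp add: poly_gp)
  also have "\<dots> = complex_of_real ((cmod (1 - b))^2)" using complex_norm_square[of "1-b"] by simp
  finally have e: "poly (gp b) 1 = complex_of_real ((cmod (1 - b))^2)" .
  have "b \<noteq> 1" using assms by auto
  then have "(cmod (1 - b))^2 > 0" by simp
  with e show ?thesis by blast
qed

lemma Gp_at_1: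
  assumes "\<forall>j<k. cmod (a j) < 1"
  shows "\<exists>s. poly (Gp a k) 1 = complex_of_real s \<and> s > 0"
  using assms
proof (induction k)
  case 0 then show ?case by (intro exI[of _ 1]) simp
next
  case (Suc k)
  then obtain s where s: "poly (Gp a k) 1 = complex_of_real s" "s > 0" by auto
  obtain t where t: "poly (gp (a k)) 1 = complex_of_real t" "t > 0" using gp_at_1 Suc.prems by blast
  show ?case using s t by (intro exI[of _ "t * s"]) simp
qed

lemma Np_at_1:
  assumes "\<forall>j<k. cmod (a j) < 1"
  shows "\<exists>r. poly (Np a k) 1 = complex_of_real r \<and> r \<ge> 0 \<and> (k > 0 \<longrightarrow> r > 0)"
  using assms
proof (induction k)
  case 0 then show ?case by (intro exI[of _ 0]) simp
next
  case (Suc k)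
  then obtain r where r: "poly (Np a k) 1 = complex_of_real r" "r \<ge> 0" by auto
  have pk: "\<forall>j<k. cmod (a j) < 1" using Suc.prems by simp
  obtain s where s: "poly (Gp a k) 1 = complex_of_real s" "s > 0" using Gp_at_1[OF pk] by auto
  obtain t where t: "poly (gp (a k)) 1 = complex_of_real t" "t > 0" using gp_at_1 Suc.prems by blast
  have c: "1 - cnj (a k) * a k = complex_of_real (1 - (cmod (a k))^2)"
    using complex_norm_square[of "a k"] by (simp add: mult.commute)
  have c0: "1 - (cmod (a k))^2 > 0" using Suc.prems by (simp add: abs_square_less_1)
  have "poly (Np a (Suc k)) 1 = complex_of_real (t * r + (1 - (cmod (a k))^2) * s)"
    using r s t c by simp
  moreover have "t * r + (1 - (cmod (a k))^2) * s > 0"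
    using r s t c0 by (simp add: add_nonneg_pos)
  ultimately show ?case by (intro exI[of _ "t * r + (1 - (cmod (a k))^2) * s"]) simp
qed

lemma Np_nonzero:
  assumes "\<forall>j<k. cmod (a j) < 1" "k > 0"
  shows "Np a k \<noteq> 0"
proof
  assume "Np a k = 0"
  then have "poly (Np a k) 1 = 0" by simp
  moreover obtain r where "poly (Np a k) 1 = complex_of_real r" "r > 0" using Np_at_1[OF assms(1)] assms(2) by auto
  ultimately show False by simp
qed


lemma count_zeros:
  fixes N :: "complex poly"
  assumes "N \<noteq> 0" "degree N \<le> 2*k - 2" "k \<ge> 1"
    and refl: "\<And>z. z \<noteq> 0 \<Longrightarrow> poly N z = 0 \<Longrightarrow> poly N (1 / cnj z) = 0"
  shows "finite {z \<in> ball 0 1. poly N z = 0} \<and> card {z \<in> ball 0 1. poly N z = 0} \<le> k - 1"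
proof -
  define A where "A = {z. poly N z = 0}"
  define Z where "Z = {z \<in> ball 0 1. poly N z = 0}"
  define R where "R = (\<lambda>z::complex. 1 / cnj z)"
  have fA: "finite A" unfolding A_def using poly_roots_finite[OF assms(1)] .
  have cA: "card A \<le> 2*k - 2" unfolding A_def using card_poly_roots_bound[OF assms(1)] assms(2) by linarith
  have ZA: "Z \<subseteq> A" unfolding Z_def A_def by auto
  have fZ: "finite Z" using finite_subset[OF ZA fA] .
  have RA: "R ` (Z - {0}) \<subseteq> A" unfolding Z_def A_def R_def using refl by auto
  have disj: "Z \<inter> R ` (Z - {0}) = {}"
  proof (rule ccontr)
    assume "Z \<inter> R ` (Z - {0}) \<noteq> {}"
    then obtain w where w: "w \<in> Z" "w \<in> Z - {0}" "R w \<in> Z" by auto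
    have "cmod w < 1" "w \<noteq> 0" using w unfolding Z_def by auto
    then have "cmod (R w) > 1" unfolding R_def by (simp add: norm_divide)
    with w(3) show False unfolding Z_def by auto
  qed
  have inj: "inj_on R (Z - {0})" unfolding R_def inj_on_def by simp
  have "card Z + card (Z - {0}) = card (Z \<union> R ` (Z - {0}))"
    using card_Un_disjoint[OF fZ finite_imageI[OF finite_Diff[OF fZ]] disj]
      card_image[OF inj] by simp
  also have "\<dots> \<le> card A" using ZA RA fA by (intro card_mono) auto
  finally have "card Z + card (Z - {0}) \<le> 2*k - 2" using cA by linarith
  moreover have "card (Z - {0}) \<ge> card Z - 1" by (simp add: card_Diff_singleton_if)
  ultimately have "card Z \<le> k - 1" using assms(3) by linarith
  then show ?thesis using fZ unfolding Z_def by simp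
qed

lemma prod_lt_1:
  fixes f :: "nat \<Rightarrow> real"
  assumes "\<forall>j<k. 0 \<le> f j \<and> f j < 1" "k \<ge> 1"
  shows "(\<Prod>j<k. f j) < 1"
  using assms
proof (induction k)
  case 0 then show ?case by simp
next
  case (Suc k)
  show ?case
  proof (cases "k = 0")
    case True then show ?thesis using Suc.prems by simp
  next
    case False
    then have "(\<Prod>j<k. f j) < 1" using Suc by simp
    moreover have "0 \<le> f k" "f k < 1" using Suc.prems by auto
    moreover have "0 \<le> (\<Prod>j<k. f j)" using Suc.prems by (intro prod_nonneg) auto
    ultimately have "(\<Prod>j<k. f j) * f k \<le> 1 * f k" by (intro mult_right_mono) auto
    then show ?thesis using \<open>f k < 1\<close> by simp
  qed
qed

lemma blaschke_props:
  assumes "finite_blaschke k B" "k \<ge> 1"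
  shows "(\<forall>z\<in>ball 0 1. B field_differentiable at z) \<and> B ` ball 0 1 \<subseteq> ball 0 1
         \<and> finite (critical_values B) \<and> card (critical_values B) \<le> k - 1"
proof -
  obtain \<gamma> a where g: "cmod \<gamma> = 1" and a: "\<forall>j<k. a j \<in> ball 0 1"
    and B: "\<forall>z. B z = \<gamma> * (\<Prod>j<k. (z - a j) / (1 - cnj (a j) * z))"
    using assms(1) unfolding finite_blaschke_def by blast
  have Bf: "B = (\<lambda>z. \<gamma> * (\<Prod>j<k. (z - a j) / (1 - cnj (a j) * z)))" using B by auto
  have an: "\<forall>j<k. cmod (a j) < 1" using a by simp
  define Q where "Q = (\<lambda>z. \<Prod>j<k. 1 - cnj (a j) * z)"
  have nz: "\<forall>j<k. 1 - cnj (a j) * z \<noteq> 0" if "z \<in> ball 0 1" for z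
    using factor_in_disc(1) an that by simp
  have Q0: "Q z \<noteq> 0" if "z \<in> ball 0 1" for z
    using nz[OF that] unfolding Q_def by simp
  have D: "(B has_field_derivative \<gamma> * (poly (Np a k) z / (Q z)^2)) (at z)" if "z \<in> ball 0 1" for z
    unfolding Bf Q_def by (intro DERIV_cmult blaschke_deriv nz that)
  have diff: "\<forall>z\<in>ball 0 1. B field_differentiable at z"
    using D field_differentiable_def by blast
  have crit: "deriv B z = 0 \<longleftrightarrow> poly (Np a k) z = 0" if "z \<in> ball 0 1" for z
    using DERIV_imp_deriv[OF D[OF that]] Q0[OF that] g by auto
  have img: "B ` ball 0 1 \<subseteq> ball 0 1"
  proof
    fix w assume "w \<in> B ` ball 0 1"
    then obtain z where z: "z \<in> ball 0 1" "w = B z" by auto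
    have "cmod w = (\<Prod>j<k. cmod ((z - a j) / (1 - cnj (a j) * z)))"
      using z g by (simp add: B norm_mult prod_norm)
    also have "\<dots> < 1"
      using factor_in_disc(2) an z assms(2) by (intro prod_lt_1) auto
    finally show "w \<in> ball 0 1" by simp
  qed
  define Z where "Z = {z \<in> ball 0 1. poly (Np a k) z = 0}"
  have cz: "finite Z \<and> card Z \<le> k - 1" unfolding Z_def
  proof (rule count_zeros[OF Np_nonzero[OF an] degree_Np])
    show "k > 0" "1 \<le> k" using assms(2) by auto
    fix z :: complex assume "z \<noteq> 0" "poly (Np a k) z = 0"
    then show "poly (Np a k) (1 / cnj z) = 0" using Np_reflect[of z a k] by simp
  qed
  have sub: "critical_values B \<subseteq> B ` Z"
    unfolding critical_values_def Z_def using crit by auto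
  have "finite (critical_values B)" using cz finite_subset[OF sub] by blast
  moreover have "card (critical_values B) \<le> k - 1"
    using card_mono[OF finite_imageI sub] card_image_le[of Z B] cz by fastforce
  ultimately show ?thesis using diff img by blast
qed


lemma foldr_comp: "foldr (\<lambda>j f. Bs j \<circ> f) xs g = foldr (\<lambda>j f. Bs j \<circ> f) xs id \<circ> g"
  by (induction xs) auto

lemma compose_Suc: "compose_all (Suc n) Bs = compose_all n Bs \<circ> Bs n"
  unfolding compose_all_def by (simp, subst foldr_comp) simp

lemma crit_comp:
  assumes "\<forall>z\<in>ball 0 1. C field_differentiable at z"
    and "\<forall>z\<in>ball 0 1. B field_differentiable at z"
    and "B ` ball 0 1 \<subseteq> ball 0 1"
  shows "critical_values (C \<circ> B) \<subseteq> critical_values C \<union> C ` critical_values B"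
proof
  fix w assume "w \<in> critical_values (C \<circ> B)"
  then obtain z where w: "w \<in> ball 0 1" and z: "z \<in> ball 0 1" "w = C (B z)" "deriv (C \<circ> B) z = 0"
    unfolding critical_values_def by auto
  have Bz: "B z \<in> ball 0 1" using assms(3) z(1) by blast
  have "deriv C (B z) * deriv B z = 0"
    using deriv_chain[of B z C] assms(1,2) z Bz by simp
  then consider "deriv C (B z) = 0" | "deriv B z = 0" by auto
  then show "w \<in> critical_values C \<union> C ` critical_values B"
  proof cases
    case 1 then show ?thesis using w z Bz unfolding critical_values_def by auto
  next
    case 2
    then have "B z \<in> critical_values B" using z Bz unfolding critical_values_def by auto
    then show ?thesis using z by auto
  qed
qed

theorem proposition4p3:
  fixes n :: nat and Bs :: "nat \<Rightarrow> complex \<Rightarrow> complex" and k :: "nat \<Rightarrow> nat"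
  assumes "\<And>j. j < n \<Longrightarrow> k j \<ge> 1"
    and "\<And>j. j < n \<Longrightarrow> finite_blaschke (k j) (Bs j)"
  shows "finite (critical_values (compose_all n Bs)) \<and>
         card (critical_values (compose_all n Bs)) \<le> (\<Sum>j<n. k j - 1)"
proof -
  have "(\<forall>z\<in>ball 0 1. compose_all n Bs field_differentiable at z) \<and>
        compose_all n Bs ` ball 0 1 \<subseteq> ball 0 1 \<and>
        finite (critical_values (compose_all n Bs)) \<and>
        card (critical_values (compose_all n Bs)) \<le> (\<Sum>j<n. k j - 1)"
    using assms
  proof (induction n)
    case 0
    have "critical_values (compose_all 0 Bs) = {}"
      unfolding compose_all_def critical_values_def id_def by simp
    then show ?case unfolding compose_all_def by (simp add: field_differentiable_ident[unfolded id_def] id_def)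
  next
    case (Suc n)
    define C where "C = compose_all n Bs"
    define B where "B = Bs n"
    have IH: "(\<forall>z\<in>ball 0 1. C field_differentiable at z) \<and> C ` ball 0 1 \<subseteq> ball 0 1 \<and>
        finite (critical_values C) \<and> card (critical_values C) \<le> (\<Sum>j<n. k j - 1)"
      unfolding C_def using Suc by simp
    have BP: "(\<forall>z\<in>ball 0 1. B field_differentiable at z) \<and> B ` ball 0 1 \<subseteq> ball 0 1
         \<and> finite (critical_values B) \<and> card (critical_values B) \<le> k n - 1"
      unfolding B_def using Suc.prems by (intro blaschke_props) auto
    have eq: "compose_all (Suc n) Bs = C \<circ> B" unfolding C_def B_def by (rule compose_Suc)
    have sub: "critical_values (C \<circ> B) \<subseteq> critical_values C \<union> C ` critical_values B"
      using IH BP by (intro crit_comp) auto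
    have fin: "finite (critical_values C \<union> C ` critical_values B)" using IH BP by simp
    have "card (critical_values (C \<circ> B)) \<le> card (critical_values C \<union> C ` critical_values B)"
      using card_mono[OF fin sub] .
    also have "\<dots> \<le> card (critical_values C) + card (C ` critical_values B)" by (rule card_Un_le)
    also have "\<dots> \<le> card (critical_values C) + card (critical_values B)" using card_image_le[of "critical_values B" C] BP by simp
    also have "\<dots> \<le> (\<Sum>j<Suc n. k j - 1)" using IH BP by simp
    finally have c: "card (critical_values (C \<circ> B)) \<le> (\<Sum>j<Suc n. k j - 1)" .
    have d: "\<forall>z\<in>ball 0 1. (C \<circ> B) field_differentiable at z"
      using IH BP by (auto intro!: field_differentiable_compose)
    have i: "(C \<circ> B) ` ball 0 1 \<subseteq> ball 0 1" using IH BP by (auto simp: image_subset_iff)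
    show ?case unfolding eq using c d i finite_subset[OF sub fin] by blast
  qed
  then show ?thesis by blast
qed

end
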